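(* Let $\mathbb{G}$ be a Carnot group of homogeneous dimension $Q$ with Carnot-Carathéodory metric $d_{CC}$ and Haar measure $\mu$, and let $T=T_{\lambda}$ be an invariant $k$-precurrent on $\mathbb{G}$ (i.e. $\lambda\in\bigwedge^kH$ is constant). Then for every $r>0$, $\Delta_{r\#}T=r^{k-Q}\,T$, where $\Delta_{r\#}T(f\,dg^1\wedge\dots\wedge dg^k)=T\big((f\circ\Delta_r)\,d(g^1\circ\Delta_r)\wedge\dots\wedge d(g^k\circ\Delta_r)\big)$.
   Context: A Carnot group is a connected, simply connected Lie group whose Lie algebra has a stratification $\mathfrak g=V_1\oplus\dots\oplus V_m$ with $[V_1,V_j]=V_{j+1}$ ($j<m$), $[\mathfrak g,V_m]=0$; $H=V_1$ with a fixed inner product; homogeneous dimension $Q=\sum_j j\dim V_j$. $d_{CC}(p,q)$ is the infimum of lengths of piecewise smooth paths from $p$ to $q$ tangent to left translates of $H$. Dilations $\Delta_r$: group automorphisms whose differential multiplies $V_j$ by $r^j$. For $g$ locally $d_{CC}$-Lipschitz, $d_Pg_p\in\mathfrak g^*$ is the Pansu differential (differential of the homomorphism $q\mapsto\lim_{t\to0}(g(p\Delta_t(q))-g(p))/t$, existing for $\mu$-a.e. $p$). A $k$-precurrent is $T_\lambda(f\,dg^1\wedge\dots\wedge dg^k)=\int_{\mathbb{G}}\langle f\,d_Pg^1\wedge\dots\wedge d_Pg^k,\lambda\rangle\,d\mu$ ($f$ compactly supported Lipschitz or bounded Borel, $g^i$ locally $d_{CC}$-Lipschitz) with $\lambda\colon\mathbb{G}\to\bigwedge^kH$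 locally integrable; it is invariant if $\lambda$ is a.e. constant. *)

theory Defs
  imports "HOL-Analysis.Analysis"
begin

text \<open>
  The underlying set of the
  group is its Lie algebra g, realised as a Euclidean space 'a (so exp = id).
  The Lie bracket is br, the stratification is V 1, ..., V m, and the group law
  is the Baker-Campbell-Hausdorff product given by Dynkin's formula (a finite
  sum, since g is nilpotent of step m; all omitted terms are brackets of more
  than m elements and vanish).  The horizontal space is H = V 1, with the inner
  product inherited from 'a.
\<close>

fun rnb :: "('a \<Rightarrow> 'a \<Rightarrow> 'a) \<Rightarrow> 'a list \<Rightarrow> 'a::zero" where
  "rnb br [] = 0"
| "rnb br [z] = z"
| "rnb br (z # z' # zs) = br z (rnb br (z' # zs))"

definition dynkin_word :: "'a \<Rightarrow> 'a \<Rightarrow> (nat \<times> nat) list \<Rightarrow> 'a list" where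
  "dynkin_word X Y ps = concat (map (\<lambda>(a, b). replicate a X @ replicate b Y) ps)"

definition bch :: "nat \<Rightarrow> ('a::real_vector \<Rightarrow> 'a \<Rightarrow> 'a) \<Rightarrow> 'a \<Rightarrow> 'a \<Rightarrow> 'a" where
  "bch m br X Y =
     (\<Sum>n\<in>{1..m}. \<Sum>ps\<in>{ps. length ps = n \<and> set ps \<subseteq> {(a, b). a \<le> m \<and> b \<le> m \<and> 0 < a + b}}.
        ((-1) ^ (n - 1) / (real n * real (\<Sum>(a, b)\<leftarrow>ps. a + b) * (\<Prod>(a, b)\<leftarrow>ps. fact a * fact b)))
          *\<^sub>R rnb br (dynkin_word X Y ps))"

definition carnot :: "('a::euclidean_space \<Rightarrow> 'a \<Rightarrow> 'a) \<Rightarrow> nat \<Rightarrow> (nat \<Rightarrow> 'a set) \<Rightarrow> bool" where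
  "carnot br m V \<longleftrightarrow>
     1 \<le> m \<and> bilinear br \<and> (\<forall>x. br x x = 0) \<and>
     (\<forall>x y z. br x (br y z) + br y (br z x) + br z (br x y) = 0) \<and>
     (\<forall>j\<in>{1..m}. subspace (V j)) \<and>
     (\<forall>x. \<exists>!v. (\<forall>j. v j \<in> (if j \<in> {1..m} then V j else {0})) \<and> x = (\<Sum>j=1..m. v j)) \<and>
     (\<forall>j\<in>{1..<m}. span {br x y | x y. x \<in> V 1 \<and> y \<in> V j} = V (Suc j)) \<and>
     (\<forall>x y. y \<in> V m \<longrightarrow> br x y = 0)"

definition stratum_comp :: "nat \<Rightarrow> (nat \<Rightarrow> 'a::real_vector set) \<Rightarrow> nat \<Rightarrow> 'a \<Rightarrow> 'a" where
  "stratum_comp m V j x =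
     (THE v. (\<forall>i. v i \<in> (if i \<in> {1..m} then V i else {0})) \<and> x = (\<Sum>i=1..m. v i)) j"

definition dil :: "nat \<Rightarrow> (nat \<Rightarrow> 'a::real_vector set) \<Rightarrow> real \<Rightarrow> 'a \<Rightarrow> 'a" where
  "dil m V r x = (\<Sum>j=1..m. (r ^ j) *\<^sub>R stratum_comp m V j x)"

definition hom_dim :: "nat \<Rightarrow> (nat \<Rightarrow> 'a::euclidean_space set) \<Rightarrow> nat" where
  "hom_dim m V = (\<Sum>j=1..m. j * dim (V j))"

definition ltv :: "nat \<Rightarrow> ('a::euclidean_space \<Rightarrow> 'a \<Rightarrow> 'a) \<Rightarrow> 'a \<Rightarrow> 'a \<Rightarrow> 'a" where
  "ltv m br p v = vector_derivative (\<lambda>s. bch m br p (s *\<^sub>R v)) (at 0)"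

definition cc_dist :: "('a::euclidean_space \<Rightarrow> 'a \<Rightarrow> 'a) \<Rightarrow> nat \<Rightarrow> (nat \<Rightarrow> 'a set) \<Rightarrow> 'a \<Rightarrow> 'a \<Rightarrow> real" where
  "cc_dist br m V p q = Inf {integral {0..1} (\<lambda>t. norm (h t)) | \<gamma> h.
      \<gamma> piecewise_C1_differentiable_on {0..1::real} \<and> \<gamma> 0 = p \<and> \<gamma> 1 = q \<and>
      (\<lambda>t. norm (h t)) integrable_on {0..1} \<and>
      (\<exists>S. finite S \<and> (\<forall>t\<in>{0..1} - S. h t \<in> V 1 \<and>
            (\<gamma> has_vector_derivative ltv m br (\<gamma> t) (h t)) (at t within {0..1})))}"

definition cc_lipschitz :: "('a::euclidean_space \<Rightarrow> 'a \<Rightarrow> 'a) \<Rightarrow> nat \<Rightarrow> (nat \<Rightarrow> 'a set) \<Rightarrow> ('a \<Rightarrow> real) \<Rightarrow> bool" where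
  "cc_lipschitz br m V f \<longleftrightarrow> (\<exists>C. \<forall>x y. \<bar>f x - f y\<bar> \<le> C * cc_dist br m V x y)"

definition cc_loc_lipschitz :: "('a::euclidean_space \<Rightarrow> 'a \<Rightarrow> 'a) \<Rightarrow> nat \<Rightarrow> (nat \<Rightarrow> 'a set) \<Rightarrow> ('a \<Rightarrow> real) \<Rightarrow> bool" where
  "cc_loc_lipschitz br m V g \<longleftrightarrow>
     (\<forall>p. \<exists>e>0. \<exists>C. \<forall>x y. cc_dist br m V p x < e \<longrightarrow> cc_dist br m V p y < e \<longrightarrow>
          \<bar>g x - g y\<bar> \<le> C * cc_dist br m V x y)"

definition test_fun :: "('a::euclidean_space \<Rightarrow> 'a \<Rightarrow> 'a) \<Rightarrow> nat \<Rightarrow> (nat \<Rightarrow> 'a set) \<Rightarrow> ('a \<Rightarrow> real) \<Rightarrow> bool" where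
  "test_fun br m V f \<longleftrightarrow>
     (cc_lipschitz br m V f \<and> compact (closure {x. f x \<noteq> 0})) \<or>
     (f \<in> borel_measurable borel \<and> bounded (range f))"

text \<open>Pansu differential d_P g_p in g^*: the (linear, in exponential coordinates)
  homomorphism q |-> lim_{t->0+} (g(p Delta_t q) - g p)/t, where it exists; 0 elsewhere
  (a null set for locally Lipschitz g, by Pansu's theorem).\<close>
definition pansu_diff :: "('a::euclidean_space \<Rightarrow> 'a \<Rightarrow> 'a) \<Rightarrow> nat \<Rightarrow> (nat \<Rightarrow> 'a set) \<Rightarrow> ('a \<Rightarrow> real) \<Rightarrow> 'a \<Rightarrow> 'a \<Rightarrow> real" where
  "pansu_diff br m V g p =
     (if \<exists>L. linear L \<and> (\<forall>X Y. L (bch m br X Y) = L X + L Y) \<and>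
            (\<forall>X. ((\<lambda>t. (g (bch m br p (dil m V t X)) - g p) / t) \<longlongrightarrow> L X) (at_right 0))
      then (THE L. linear L \<and> (\<forall>X Y. L (bch m br X Y) = L X + L Y) \<and>
            (\<forall>X. ((\<lambda>t. (g (bch m br p (dil m V t X)) - g p) / t) \<longlongrightarrow> L X) (at_right 0)))
      else (\<lambda>_. 0))"

text \<open>Elements of \<Lambda>^k H, as finite formal sums  \<Sum> c * v1 \<and> ... \<and> vk  with vi in H.\<close>
definition kvec :: "nat \<Rightarrow> (nat \<Rightarrow> 'a set) \<Rightarrow> (real \<times> 'a list) list \<Rightarrow> bool" where
  "kvec k V lam \<longleftrightarrow> (\<forall>(c, vs)\<in>set lam. length vs = k \<and> set vs \<subseteq> V 1)"

definition wedge_pair :: "nat \<Rightarrow> (nat \<Rightarrow> 'a \<Rightarrow> real) \<Rightarrow> (real \<times> 'a list) list \<Rightarrow> real" where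
  "wedge_pair k \<alpha> lam =
     (\<Sum>(c, vs)\<leftarrow>lam. c * (\<Sum>\<sigma> | \<sigma> permutes {..<k}. of_int (sign \<sigma>) * (\<Prod>i<k. \<alpha> i (vs ! \<sigma> i))))"

text \<open>Invariant k-precurrent T_lam (lam constant), Haar measure = Lebesgue measure
  in exponential coordinates:  T (f dg^0 \<and> ... \<and> dg^{k-1}).\<close>
definition inv_precurrent :: "('a::euclidean_space \<Rightarrow> 'a \<Rightarrow> 'a) \<Rightarrow> nat \<Rightarrow> (nat \<Rightarrow> 'a set) \<Rightarrow> nat \<Rightarrow>
    (real \<times> 'a list) list \<Rightarrow> ('a \<Rightarrow> real) \<Rightarrow> (nat \<Rightarrow> 'a \<Rightarrow> real) \<Rightarrow> real" where
  "inv_precurrent br m V k lam f g =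
     (\<integral>p. f p * wedge_pair k (\<lambda>i. pansu_diff br m V (g i) p) lam \<partial>lborel)"

definition dil_push :: "nat \<Rightarrow> (nat \<Rightarrow> 'a::real_vector set) \<Rightarrow> real \<Rightarrow>
    (('a \<Rightarrow> real) \<Rightarrow> (nat \<Rightarrow> 'a \<Rightarrow> real) \<Rightarrow> real) \<Rightarrow> ('a \<Rightarrow> real) \<Rightarrow> (nat \<Rightarrow> 'a \<Rightarrow> real) \<Rightarrow> real" where
  "dil_push m V r T f g = T (f \<circ> dil m V r) (\<lambda>i. g i \<circ> dil m V r)"

end

theory Submission
  imports Defs
begin

lemma lborel_distr_uminus_e: "distr lborel borel uminus = (lborel :: 'a::euclidean_space measure)"
proof -
  have "(lborel :: 'a measure) = density (distr lborel borel (\<lambda>x. 0 + (-1) *\<^sub>R x)) (\<lambda>_. \<bar>-1::real\<bar> ^ DIM('a))"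
    by (rule lborel_affine) simp
  then show ?thesis by (simp add: density_1)
qed

lemma nn_tr:
  fixes h :: "'a::euclidean_space \<Rightarrow> ennreal"
  assumes "h \<in> borel_measurable borel"
  shows "(\<integral>\<^sup>+x. h (a + x) \<partial>lborel) = (\<integral>\<^sup>+x. h x \<partial>lborel)"
proof -
  have "(\<integral>\<^sup>+x. h x \<partial>lborel) = (\<integral>\<^sup>+x. h x \<partial>(distr lborel borel ((+) a)))"
    by (simp add: lborel_distr_plus)
  also have "\<dots> = (\<integral>\<^sup>+x. h (a + x) \<partial>lborel)"
    using assms by (intro nn_integral_distr) auto
  finally show ?thesis ..
qed

lemma nn_neg:
  fixes h :: "'a::euclidean_space \<Rightarrow> ennreal"
  assumes "h \<in> borel_measurable borel"
  shows "(\<integral>\<^sup>+x. h (- x) \<partial>lborel) = (\<integral>\<^sup>+x. h x \<partial>lborel)"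
proof -
  have "(\<integral>\<^sup>+x. h x \<partial>lborel) = (\<integral>\<^sup>+x. h x \<partial>(distr lborel borel uminus))"
    by (simp add: lborel_distr_uminus_e)
  also have "\<dots> = (\<integral>\<^sup>+x. h (- x) \<partial>lborel)"
    using assms by (intro nn_integral_distr) auto
  finally show ?thesis ..
qed

lemma lin_meas: "linear (S :: 'a::euclidean_space \<Rightarrow> 'b::euclidean_space) \<Longrightarrow> S \<in> borel_measurable borel"
  by (intro borel_measurable_continuous_onI linear_continuous_on) (simp add: linear_conv_bounded_linear)

lemma lin_scale_sym:
  fixes S T :: "'a::euclidean_space \<Rightarrow> 'a"
  assumes lin: "linear S" and inv: "\<And>y. S (T y) = y"
    and A: "A \<in> sets borel" and B: "B \<in> sets borel"
  shows "emeasure lborel (S -` A) * emeasure lborel B = emeasure lborel A * emeasure lborel (S -` B)"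
proof -
  have Sm: "S \<in> borel_measurable borel" using lin by (rule lin_meas)
  define F :: "'a set \<Rightarrow> 'a set \<Rightarrow> 'a \<Rightarrow> 'a \<Rightarrow> ennreal"
    where "F = (\<lambda>A B x y. indicator A (S x) * indicator B (S x + y))"
  have FmG: "(\<lambda>z. F A' B' (a z) (b z)) \<in> borel_measurable (lborel \<Otimes>\<^sub>M lborel)"
    if "A' \<in> sets borel" "B' \<in> sets borel"
      and am: "a \<in> borel_measurable (lborel \<Otimes>\<^sub>M lborel)"
      and bm: "b \<in> borel_measurable (lborel \<Otimes>\<^sub>M lborel)" for A' B' a b
  proof -
    have f: "(\<lambda>z. S (a z)) \<in> borel_measurable (lborel \<Otimes>\<^sub>M lborel)"
      by (rule measurable_compose[OF am Sm])
    have g: "(\<lambda>z. S (a z) + b z) \<in> borel_measurable (lborel \<Otimes>\<^sub>M lborel)"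
      by (rule borel_measurable_add[OF f bm])
    have "(\<lambda>z. indicator A' (S (a z)) * indicator B' (S (a z) + b z) :: ennreal) \<in> borel_measurable (lborel \<Otimes>\<^sub>M lborel)"
      by (intro borel_measurable_times_ennreal measurable_compose[OF f borel_measurable_indicator]
          measurable_compose[OF g borel_measurable_indicator] that)
    then show ?thesis by (simp add: F_def)
  qed
  have fstm: "fst \<in> borel_measurable (lborel \<Otimes>\<^sub>M (lborel :: 'a measure))"
    using measurable_fst[of "lborel :: 'a measure" "lborel :: 'a measure"] by simp
  have sndm: "snd \<in> borel_measurable (lborel \<Otimes>\<^sub>M (lborel :: 'a measure))"
    using measurable_snd[of "lborel :: 'a measure" "lborel :: 'a measure"] by simp
  have Fm: "case_prod (F A' B') \<in> borel_measurable (lborel \<Otimes>\<^sub>M lborel)"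
    if "A' \<in> sets borel" "B' \<in> sets borel" for A' B'
    using FmG[OF that fstm sndm] by (simp add: case_prod_beta')
  have M1: "(\<lambda>y. indicator B' (S x + y) :: ennreal) \<in> borel_measurable borel"
    if "B' \<in> sets borel" for B' x
  proof -
    have "(\<lambda>y. S x + y) \<in> borel_measurable borel"
      by (intro borel_measurable_continuous_onI continuous_intros)
    then show ?thesis by (rule measurable_compose[OF _ borel_measurable_indicator[OF that]])
  qed
  have M2: "(\<lambda>x. indicator A' (S x + y) :: ennreal) \<in> borel_measurable borel"
    if "A' \<in> sets borel" for A' y
  proof -
    have "(\<lambda>x. S x + y) \<in> borel_measurable borel"
      by (rule borel_measurable_add[OF Sm borel_measurable_const])
    then show ?thesis by (rule measurable_compose[OF _ borel_measurable_indicator[OF that]])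
  qed
  have Fm1: "F A' B' x \<in> borel_measurable borel" "(\<lambda>x. F A' B' x y) \<in> borel_measurable borel"
    if "A' \<in> sets borel" "B' \<in> sets borel" for A' B' x y
  proof -
    show "F A' B' x \<in> borel_measurable borel"
      unfolding F_def by (intro borel_measurable_times_ennreal borel_measurable_const M1 that)
    show "(\<lambda>x. F A' B' x y) \<in> borel_measurable borel"
      using M2[of A' 0] M2[of B' y] that by (simp add: F_def borel_measurable_times_ennreal)
  qed
  have C1: "(\<integral>\<^sup>+x. \<integral>\<^sup>+y. F A' B' x y \<partial>lborel \<partial>lborel) = emeasure lborel (S -` A') * emeasure lborel B'"
    if "A' \<in> sets borel" "B' \<in> sets borel" for A' B'
  proof -
    have "(\<integral>\<^sup>+y. F A' B' x y \<partial>lborel) = indicator A' (S x) * emeasure lborel B'" for x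
    proof -
      have "(\<integral>\<^sup>+y. F A' B' x y \<partial>lborel) = indicator A' (S x) * (\<integral>\<^sup>+y. indicator B' (S x + y) \<partial>lborel)"
        unfolding F_def by (rule nn_integral_cmult) (simp add: M1 that)
      also have "(\<integral>\<^sup>+y. indicator B' (S x + y) \<partial>lborel) = (\<integral>\<^sup>+y. indicator B' y \<partial>lborel)"
        by (rule nn_tr) (rule borel_measurable_indicator[OF that(2)])
      finally show ?thesis using that(2) by (simp add: nn_integral_indicator)
    qed
    then have "(\<integral>\<^sup>+x. \<integral>\<^sup>+y. F A' B' x y \<partial>lborel \<partial>lborel) = (\<integral>\<^sup>+x. indicator A' (S x) * emeasure lborel B' \<partial>lborel)"
      by simp
    also have "\<dots> = (\<integral>\<^sup>+x. indicator A' (S x) \<partial>lborel) * emeasure lborel B'"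
      using M2[of A' 0] that by (intro nn_integral_multc) simp
    also have "(\<integral>\<^sup>+x. indicator A' (S x) \<partial>lborel) = (\<integral>\<^sup>+x. indicator (S -` A') x \<partial>lborel)"
      by (simp add: indicator_def)
    also have "\<dots> = emeasure lborel (S -` A')"
      using measurable_sets_borel[OF Sm that(1)] by (intro nn_integral_indicator) simp
    finally show ?thesis .
  qed
  have H: "(\<lambda>y. \<integral>\<^sup>+x. F A B x y \<partial>lborel) \<in> borel_measurable borel"
  proof -
    have "case_prod (\<lambda>y x. F A B x y) \<in> borel_measurable (lborel \<Otimes>\<^sub>M lborel)"
      using FmG[OF A B sndm fstm] by (simp add: case_prod_beta')
    from lborel.borel_measurable_nn_integral[OF this] show ?thesis by simp
  qed
  have C3: "(\<integral>\<^sup>+x. F B A x y \<partial>lborel) = (\<integral>\<^sup>+x. F A B x (- y) \<partial>lborel)" for y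
  proof -
    have "(\<integral>\<^sup>+x. F B A x y \<partial>lborel) = (\<integral>\<^sup>+x. F B A (T (- y) + x) y \<partial>lborel)"
      by (rule nn_tr[symmetric]) (rule Fm1(2)[OF B A])
    also have "\<dots> = (\<integral>\<^sup>+x. F A B x (- y) \<partial>lborel)"
      by (simp add: F_def linear_add[OF lin] inv mult.commute)
    finally show ?thesis .
  qed
  have "emeasure lborel (S -` A) * emeasure lborel B = (\<integral>\<^sup>+x. \<integral>\<^sup>+y. F A B x y \<partial>lborel \<partial>lborel)"
    using C1[OF A B] by simp
  also have "\<dots> = (\<integral>\<^sup>+y. \<integral>\<^sup>+x. F A B x y \<partial>lborel \<partial>lborel)"
    by (rule lborel_pair.Fubini'[symmetric]) (rule Fm[OF A B])
  also have "\<dots> = (\<integral>\<^sup>+y. \<integral>\<^sup>+x. F A B x (- y) \<partial>lborel \<partial>lborel)"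
    by (rule nn_neg[symmetric, OF H])
  also have "\<dots> = (\<integral>\<^sup>+y. \<integral>\<^sup>+x. F B A x y \<partial>lborel \<partial>lborel)"
    by (simp add: C3)
  also have "\<dots> = (\<integral>\<^sup>+x. \<integral>\<^sup>+y. F B A x y \<partial>lborel \<partial>lborel)"
    by (rule lborel_pair.Fubini') (rule Fm[OF B A])
  also have "\<dots> = emeasure lborel (S -` B) * emeasure lborel A"
    using C1[OF B A] by simp
  finally show ?thesis by (simp add: mult.commute)
qed


definition kap :: "('a::euclidean_space \<Rightarrow> 'a) \<Rightarrow> ennreal" where
  "kap S = emeasure lborel (S -` cbox 0 One)"

lemma unit_box: "emeasure lborel (cbox (0::'a::euclidean_space) One) = 1"
  by (simp add: emeasure_lborel_cbox_eq)

lemma lin_scale: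
  fixes S T :: "'a::euclidean_space \<Rightarrow> 'a"
  assumes lin: "linear S" and inv: "\<And>y. S (T y) = y" and A: "A \<in> sets borel"
  shows "emeasure lborel (S -` A) = kap S * emeasure lborel A"
  using lin_scale_sym[OF lin inv A, of "cbox 0 One"] unfolding kap_def unit_box
  by (simp add: mult.commute)

lemma kap_comp:
  fixes S1 T1 S2 T2 :: "'a::euclidean_space \<Rightarrow> 'a"
  assumes "linear S1" "\<And>y. S1 (T1 y) = y" "linear S2" "\<And>y. S2 (T2 y) = y"
  shows "kap (S1 \<circ> S2) = kap S2 * kap S1"
proof -
  have m: "S1 -` cbox 0 One \<in> sets borel"
    using measurable_sets_borel[OF lin_meas[OF assms(1)], of "cbox 0 One"] by simp
  have "kap (S1 \<circ> S2) = emeasure lborel (S2 -` (S1 -` cbox 0 One))"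
    unfolding kap_def by (simp add: vimage_comp)
  also have "\<dots> = kap S2 * kap S1"
    unfolding lin_scale[OF assms(3,4) m] kap_def ..
  finally show ?thesis .
qed

lemma kap_id: "kap (\<lambda>x::'a::euclidean_space. x) = 1"
  unfolding kap_def using unit_box by simp

lemma kap_diag:
  fixes e :: "'a::euclidean_space \<Rightarrow> real"
  assumes e: "\<And>b. b \<in> Basis \<Longrightarrow> e b \<noteq> 0"
  shows "kap (\<lambda>x. \<Sum>b\<in>Basis. (e b * (x \<bullet> b)) *\<^sub>R b) = ennreal (1 / (\<Prod>b\<in>Basis. \<bar>e b\<bar>))"
proof -
  define T :: "'a \<Rightarrow> 'a" where "T = (\<lambda>x. \<Sum>b\<in>Basis. (e b * (x \<bullet> b)) *\<^sub>R b)"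
  define P where "P = (\<Prod>b\<in>Basis. \<bar>e b\<bar>)"
  have Ppos: "P > 0" unfolding P_def using e by (intro prod_pos) auto
  have L: "lborel = density (distr lborel borel T) (\<lambda>_. P)"
    using lborel_affine_euclidean[of e 0] e unfolding T_def P_def by simp
  have Tm: "T \<in> borel_measurable borel"
    unfolding T_def by (intro borel_measurable_continuous_onI continuous_intros)
  have "1 = emeasure lborel (cbox (0::'a) One)" using unit_box by simp
  also have "\<dots> = emeasure (density (distr lborel borel T) (\<lambda>_. P)) (cbox 0 One)"
    by (subst L) (rule refl)
  also have "\<dots> = P * emeasure (distr lborel borel T) (cbox 0 One)"
    by (subst emeasure_density) (auto simp: nn_integral_cmult_indicator)
  also have "\<dots> = P * kap T"
    using Tm by (simp add: emeasure_distr kap_def)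
  finally have h: "1 = ennreal P * kap T" .
  have "kap T = ennreal (1 / P) * (ennreal P * kap T)"
    using Ppos by (simp add: ennreal_mult'[symmetric] mult.assoc[symmetric])
  also have "\<dots> = ennreal (1 / P)" using h by simp
  finally show ?thesis unfolding T_def P_def .
qed


locale carn =
  fixes br :: "'a::euclidean_space \<Rightarrow> 'a \<Rightarrow> 'a" and m :: nat and V :: "nat \<Rightarrow> 'a set"
  assumes C: "carnot br m V"
begin

definition W :: "nat \<Rightarrow> 'a set" where "W j = (if j \<in> {1..m} then V j else {0})"

lemma m1: "1 \<le> m" using C by (simp add: carnot_def)
lemma bil: "bilinear br" using C by (simp add: carnot_def)
lemma brxx: "br x x = 0" using C by (simp add: carnot_def)
lemma jacobi: "br x (br y z) + br y (br z x) + br z (br x y) = 0" using C by (simp add: carnot_def)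
lemma subV: "j \<in> {1..m} \<Longrightarrow> subspace (V j)" using C by (simp add: carnot_def)
lemma subW: "subspace (W j)" using subV by (simp add: W_def subspace_0)
lemma uniqdec: "\<exists>!v. (\<forall>j. v j \<in> W j) \<and> x = (\<Sum>j=1..m. v j)"
  using C unfolding carnot_def W_def by blast
lemma gen: "j \<in> {1..<m} \<Longrightarrow> span {br x y | x y. x \<in> V 1 \<and> y \<in> V j} = V (Suc j)"
  using C by (simp add: carnot_def)
lemma topz: "y \<in> V m \<Longrightarrow> br x y = 0" using C by (simp add: carnot_def)

lemma W0: "0 \<in> W j" using subW subspace_0 by blast

abbreviation comp :: "nat \<Rightarrow> 'a \<Rightarrow> 'a" where "comp j x \<equiv> stratum_comp m V j x"

lemma comp_eq: "stratum_comp m V = (\<lambda>j x. (THE v. (\<forall>i. v i \<in> W i) \<and> x = (\<Sum>i=1..m. v i)) j)"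
  by (intro ext) (simp add: stratum_comp_def W_def)

lemma comp_P: "(\<forall>j. comp j x \<in> W j) \<and> x = (\<Sum>j=1..m. comp j x)"
  unfolding comp_eq by (rule theI'[OF uniqdec])

lemma comp_in: "comp j x \<in> W j" using comp_P by blast
lemma comp_sum: "x = (\<Sum>j=1..m. comp j x)" using comp_P by blast

lemma comp_uniq: assumes "\<forall>j. v j \<in> W j" "x = (\<Sum>j=1..m. v j)" shows "comp j x = v j"
proof -
  have "(THE v. (\<forall>i. v i \<in> W i) \<and> x = (\<Sum>i=1..m. v i)) = v"
    by (rule the1_equality[OF uniqdec]) (use assms in blast)
  then show ?thesis unfolding comp_eq by simp
qed

lemma comp_linear: "linear (comp j)"
proof (rule linearI)
  fix x y
  show "comp j (x + y) = comp j x + comp j y"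
  proof (rule comp_uniq)
    show "\<forall>j. comp j x + comp j y \<in> W j" using comp_in subspace_add[OF subW] by blast
    show "x + y = (\<Sum>j=1..m. comp j x + comp j y)" by (simp only: sum.distrib flip: comp_sum)
  qed
next
  fix c x
  show "comp j (c *\<^sub>R x) = c *\<^sub>R comp j x"
  proof (rule comp_uniq)
    show "\<forall>j. c *\<^sub>R comp j x \<in> W j" using comp_in subspace_scale[OF subW] by blast
    show "c *\<^sub>R x = (\<Sum>j=1..m. c *\<^sub>R comp j x)" by (simp only: flip: scaleR_sum_right comp_sum)
  qed
qed

lemma comp_W: assumes "x \<in> W n" shows "comp j x = (if j = n then x else 0)"
proof (rule comp_uniq)
  show "\<forall>j. (if j = n then x else 0) \<in> W j" using assms W0 by auto
  have "(\<Sum>j = 1..m. if j = n then x else 0) = (if n \<in> {1..m} then x else 0)"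
    by simp
  then show "x = (\<Sum>j = 1..m. if j = n then x else 0)"
    using assms by (simp add: W_def split: if_splits)
qed

abbreviation D :: "real \<Rightarrow> 'a \<Rightarrow> 'a" where "D r x \<equiv> dil m V r x"

lemma dil_linear: "linear (D r)"
  unfolding dil_def
  by (intro linear_compose_sum ballI linear_compose_scale_right comp_linear)

lemma dil_W: assumes "x \<in> W n" shows "D r x = r ^ n *\<^sub>R x"
proof -
  have "D r x = (\<Sum>j=1..m. (if j = n then r ^ n *\<^sub>R x else 0))"
    unfolding dil_def using comp_W[OF assms] by (intro sum.cong) auto
  also have "\<dots> = (if n \<in> {1..m} then r ^ n *\<^sub>R x else 0)"
    by simp
  also have "\<dots> = r ^ n *\<^sub>R x" using assms by (simp add: W_def split: if_splits)
  finally show ?thesis .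
qed

lemma comp_dil: "comp j (D r x) = r ^ j *\<^sub>R comp j x"
proof (rule comp_uniq)
  show "\<forall>j. r ^ j *\<^sub>R comp j x \<in> W j" using comp_in subspace_scale[OF subW] by blast
  show "D r x = (\<Sum>j = 1..m. r ^ j *\<^sub>R comp j x)" by (simp add: dil_def)
qed

lemma dil_dil: "D r (D t x) = D (r * t) x"
  by (simp only: dil_def[of m V r "D t x"] dil_def[of m V "r * t" x] comp_dil scaleR_scaleR power_mult_distrib)

lemma dil_1: "D 1 x = x"
proof -
  have "D 1 x = (\<Sum>j=1..m. comp j x)" by (simp add: dil_def)
  also have "\<dots> = x" by (rule comp_sum[symmetric])
  finally show ?thesis .
qed

lemma antisym: "br x y = - br y x"
proof -
  have "br (x + y) (x + y) = br x x + br y x + (br x y + br y y)"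
    by (simp only: bilinear_ladd[OF bil] bilinear_radd[OF bil])
  then have "br x y + br y x = 0" by (simp add: brxx algebra_simps)
  then show ?thesis by (simp add: eq_neg_iff_add_eq_0)
qed

lemma base: assumes "x \<in> V 1" "y \<in> W n" shows "br x y \<in> W (Suc n)"
proof -
  consider "n = 0" | "n \<in> {1..<m}" | "n = m" | "n > m" by fastforce
  then show ?thesis
  proof cases
    case 1
    then have "y = 0" using assms by (simp add: W_def)
    then show ?thesis using bil W0 by (simp add: bilinear_rzero)
  next
    case 2
    then have "br x y \<in> span {br x y | x y. x \<in> V 1 \<and> y \<in> V n}"
      using assms by (intro span_base) (auto simp: W_def)
    then show ?thesis using gen[OF 2] 2 by (auto simp: W_def)
  next
    case 3
    then have "y \<in> V m" using assms m1 by (simp add: W_def)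
    then show ?thesis using topz W0 by simp
  next
    case 4
    then have "y = 0" using assms by (simp add: W_def)
    then show ?thesis using bil W0 by (simp add: bilinear_rzero)
  qed
qed

lemma grading: "x \<in> W i \<Longrightarrow> y \<in> W j \<Longrightarrow> br x y \<in> W (i + j)"
proof (induction i arbitrary: x y j)
  case 0
  then have "x = 0" by (simp add: W_def)
  then show ?case using bil W0 by (simp add: bilinear_lzero)
next
  case (Suc i)
  show ?case
  proof (cases "i = 0")
    case True
    then have "x \<in> V 1" using Suc.prems m1 by (simp add: W_def)
    then show ?thesis using base[OF _ Suc.prems(2)] True by simp
  next
    case False
    show ?thesis
    proof (cases "Suc i \<in> {1..m}")
      case False
      then have "x = 0" using Suc.prems by (simp add: W_def)
      then show ?thesis using bil W0 by (simp add: bilinear_lzero)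
    next
      case True
      with \<open>i \<noteq> 0\<close> have ii: "i \<in> {1..<m}" by auto
      have xs: "x \<in> span {br a b | a b. a \<in> V 1 \<and> b \<in> V i}"
        using gen[OF ii] Suc.prems True by (simp add: W_def)
      have lin: "linear (\<lambda>x. br x y)" using bil by (simp add: bilinear_def)
      have sub: "subspace {x. br x y \<in> W (Suc i + j)}"
        unfolding subspace_def
        using subspace_add[OF subW] subspace_scale[OF subW] W0
        by (auto simp: linear_add[OF lin] linear_scale[OF lin] linear_0[OF lin])
      have "x \<in> {x. br x y \<in> W (Suc i + j)}"
      proof (rule span_minimal[THEN subsetD, OF _ sub xs], clarify)
        fix a b assume a: "a \<in> V 1" and b: "b \<in> V i"
        have aW: "a \<in> W 1" using a m1 by (simp add: W_def)
        have bW: "b \<in> W i" using b ii by (simp add: W_def)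
        have e: "br (br a b) y = br a (br b y) + br b (br y a)"
          using jacobi[of a b y] antisym[of y "br a b"] by (simp add: algebra_simps eq_neg_iff_add_eq_0)
        have 1: "br a (br b y) \<in> W (Suc i + j)"
          using base[OF a Suc.IH[OF bW Suc.prems(2)]] by simp
        have 2: "br b (br y a) \<in> W (Suc i + j)"
        proof -
          have "br a y \<in> W (Suc j)" using base[OF a Suc.prems(2)] .
          then have "br y a \<in> W (Suc j)" using antisym[of y a] subspace_neg[OF subW] by metis
          then show ?thesis using Suc.IH[OF bW, of "br y a" "Suc j"] by simp
        qed
        show "br (br a b) y \<in> W (Suc i + j)" using e 1 2 subspace_add[OF subW] by simp
      qed
      then show ?thesis by simp
    qed
  qed
qed


lemma dil_br: "D r (br x y) = br (D r x) (D r y)"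
proof -
  let ?I = "{1..m} \<times> {1..m}"
  have L: "linear (D r)" by (rule dil_linear)
  have "br x y = br (\<Sum>i=1..m. comp i x) (\<Sum>j=1..m. comp j y)"
    using arg_cong2[OF comp_sum[of x] comp_sum[of y], of br] .
  also have "\<dots> = (\<Sum>(i,j)\<in>?I. br (comp i x) (comp j y))"
    by (rule bilinear_sum[OF bil])
  finally have e1: "br x y = (\<Sum>(i,j)\<in>?I. br (comp i x) (comp j y))" .
  have "D r (br x y) = (\<Sum>p\<in>?I. D r ((\<lambda>(i,j). br (comp i x) (comp j y)) p))"
    unfolding e1 by (rule linear_sum[OF L])
  also have "\<dots> = (\<Sum>(i,j)\<in>?I. (r ^ (i + j)) *\<^sub>R br (comp i x) (comp j y))"
    by (intro sum.cong refl) (auto intro!: dil_W grading comp_in)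
  finally have e2: "D r (br x y) = (\<Sum>(i,j)\<in>?I. (r ^ (i + j)) *\<^sub>R br (comp i x) (comp j y))" .
  have "br (D r x) (D r y) = br (\<Sum>i=1..m. r ^ i *\<^sub>R comp i x) (\<Sum>j=1..m. r ^ j *\<^sub>R comp j y)"
    by (simp add: dil_def)
  also have "\<dots> = (\<Sum>(i,j)\<in>?I. br (r ^ i *\<^sub>R comp i x) (r ^ j *\<^sub>R comp j y))"
    by (rule bilinear_sum[OF bil])
  also have "\<dots> = (\<Sum>(i,j)\<in>?I. (r ^ (i + j)) *\<^sub>R br (comp i x) (comp j y))"
    by (intro sum.cong refl) (auto simp: bilinear_lmul[OF bil] bilinear_rmul[OF bil] power_add)
  finally show ?thesis using e2 by simp
qed

lemma dil_rnb: "rnb br (map (D r) w) = D r (rnb br w)"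
proof (induction w rule: induct_list012)
  case 1
  then show ?case by (simp add: linear_0[OF dil_linear])
next
  case (2 x)
  then show ?case by simp
next
  case (3 x y zs)
  then show ?case by (simp add: dil_br)
qed

lemma dil_dynkin: "dynkin_word (D r X) (D r Y) ps = map (D r) (dynkin_word X Y ps)"
  unfolding dynkin_word_def by (induction ps) (auto simp: map_replicate)

lemma dil_bch: "D r (bch m br X Y) = bch m br (D r X) (D r Y)"
  unfolding bch_def
  by (simp add: linear_sum[OF dil_linear] linear_scale[OF dil_linear] dil_rnb dil_dynkin)

definition PP :: "('a \<Rightarrow> real) \<Rightarrow> 'a \<Rightarrow> ('a \<Rightarrow> real) \<Rightarrow> bool" where
  "PP g p L \<longleftrightarrow> linear L \<and> (\<forall>X Y. L (bch m br X Y) = L X + L Y) \<and>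
            (\<forall>X. ((\<lambda>t. (g (bch m br p (dil m V t X)) - g p) / t) \<longlongrightarrow> L X) (at_right 0))"

lemma pansu_eq: "pansu_diff br m V g p = (if \<exists>L. PP g p L then THE L. PP g p L else (\<lambda>_. 0))"
  unfolding pansu_diff_def PP_def by (rule refl)

lemma PP_uniq: assumes "PP g p L1" "PP g p L2" shows "L1 = L2"
proof
  fix X
  have 1: "((\<lambda>t. (g (bch m br p (D t X)) - g p) / t) \<longlongrightarrow> L1 X) (at_right 0)"
    using assms(1) unfolding PP_def by blast
  have 2: "((\<lambda>t. (g (bch m br p (D t X)) - g p) / t) \<longlongrightarrow> L2 X) (at_right 0)"
    using assms(2) unfolding PP_def by blast
  show "L1 X = L2 X" by (rule tendsto_unique[OF trivial_limit_at_right_real 1 2])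
qed

lemma lin_mult: "linear (h::'a \<Rightarrow> real) \<Longrightarrow> linear (\<lambda>x. c * h x)"
  by (rule linearI) (simp_all add: linear_add linear_scale algebra_simps)

lemma lim_scale: "(r::real) > 0 \<Longrightarrow> ((\<lambda>t. f (r * t)) \<longlongrightarrow> l) (at_right 0) \<longleftrightarrow> (f \<longlongrightarrow> l) (at_right 0)"
  using tendsto_compose_filtermap[of f "times r" l "at_right 0"] filtermap_times_pos_at_right[of r 0]
  by (simp add: comp_def)

lemma quot_eq:
  assumes "r \<noteq> 0"
  shows "(\<lambda>t. ((g \<circ> D r) (bch m br p (D t X)) - (g \<circ> D r) p) / t)
       = (\<lambda>t. r * ((g (bch m br (D r p) (D (r * t) X)) - g (D r p)) / (r * t)))"
proof
  fix t
  have e: "D r (bch m br p (D t X)) = bch m br (D r p) (D (r * t) X)"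
    by (simp add: dil_bch dil_dil)
  show "((g \<circ> D r) (bch m br p (D t X)) - (g \<circ> D r) p) / t
       = r * ((g (bch m br (D r p) (D (r * t) X)) - g (D r p)) / (r * t))"
    using assms by (cases "t = 0") (simp_all add: e)
qed

lemma PP_dil:
  assumes "r > 0" "PP g (D r p) L"
  shows "PP (g \<circ> D r) p (\<lambda>X. r * L X)"
  unfolding PP_def
proof (intro conjI allI)
  show "linear (\<lambda>X. r * L X)" using assms lin_mult unfolding PP_def by blast
  fix X Y
  show "r * L (bch m br X Y) = r * L X + r * L Y" using assms unfolding PP_def by (simp add: algebra_simps)
next
  fix X
  have "((\<lambda>t. (g (bch m br (D r p) (D t X)) - g (D r p)) / t) \<longlongrightarrow> L X) (at_right 0)"
    using assms(2) unfolding PP_def by blast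
  then have "((\<lambda>t. (g (bch m br (D r p) (D (r * t) X)) - g (D r p)) / (r * t)) \<longlongrightarrow> L X) (at_right 0)"
    using lim_scale[OF assms(1), of "\<lambda>t. (g (bch m br (D r p) (D t X)) - g (D r p)) / t"] by simp
  then have "((\<lambda>t. r * ((g (bch m br (D r p) (D (r * t) X)) - g (D r p)) / (r * t))) \<longlongrightarrow> r * L X) (at_right 0)"
    by (rule tendsto_mult_left)
  then show "((\<lambda>t. ((g \<circ> D r) (bch m br p (D t X)) - (g \<circ> D r) p) / t) \<longlongrightarrow> r * L X) (at_right 0)"
    using quot_eq[of r g p X] assms(1) by simp
qed

lemma PP_dil_inv:
  assumes "r > 0" "PP (g \<circ> D r) p L"
  shows "PP g (D r p) (\<lambda>X. inverse r * L X)"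
proof -
  have "PP ((g \<circ> D r) \<circ> D (inverse r)) (D r p) (\<lambda>X. inverse r * L X)"
    using PP_dil[of "inverse r" "g \<circ> D r" "D r p" L] assms by (simp add: dil_dil dil_1)
  moreover have "(g \<circ> D r) \<circ> D (inverse r) = g" using assms by (simp add: fun_eq_iff dil_dil dil_1)
  ultimately show ?thesis by simp
qed

lemma pansu_dil:
  assumes "r > 0"
  shows "pansu_diff br m V (g \<circ> D r) p = (\<lambda>X. r * pansu_diff br m V g (D r p) X)"
proof (cases "\<exists>L. PP g (D r p) L")
  case True
  then obtain L where L: "PP g (D r p) L" by blast
  have t1: "(THE L. PP g (D r p) L) = L" using L PP_uniq by blast
  have L2: "PP (g \<circ> D r) p (\<lambda>X. r * L X)" by (rule PP_dil[OF assms L])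
  have t2: "(THE L. PP (g \<circ> D r) p L) = (\<lambda>X. r * L X)" using L2 PP_uniq by blast
  show ?thesis unfolding pansu_eq using True L2 t1 t2 by auto
next
  case False
  then have "\<not> (\<exists>L. PP (g \<circ> D r) p L)" using PP_dil_inv[OF assms] by blast
  then show ?thesis unfolding pansu_eq using False by auto
qed

end

context carn begin

definition BB :: "nat \<Rightarrow> 'a set" where
  "BB j = (SOME B. B \<subseteq> V j \<and> independent B \<and> V j \<subseteq> span B \<and> card B = dim (V j))"

lemma BB: "BB j \<subseteq> V j \<and> independent (BB j) \<and> V j \<subseteq> span (BB j) \<and> card (BB j) = dim (V j)"
proof -
  obtain B where "B \<subseteq> V j" "independent B" "V j \<subseteq> span B" "card B = dim (V j)"
    by (rule basis_exists)
  then have "\<exists>B. B \<subseteq> V j \<and> independent B \<and> V j \<subseteq> span B \<and> card B = dim (V j)" by blast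
  then show ?thesis unfolding BB_def by (rule someI_ex)
qed

lemma BB_fin: "finite (BB j)" using BB independent_bound by blast

lemma BB_W: "j \<in> {1..m} \<Longrightarrow> v \<in> BB j \<Longrightarrow> v \<in> W j"
  using BB by (auto simp: W_def)

lemma BB_nz: "v \<in> BB j \<Longrightarrow> v \<noteq> 0"
  using BB dependent_zero by blast

lemma BB_disj: assumes "i \<in> {1..m}" "j \<in> {1..m}" "i \<noteq> j" shows "BB i \<inter> BB j = {}"
proof (rule ccontr)
  assume "BB i \<inter> BB j \<noteq> {}"
  then obtain v where v: "v \<in> BB i" "v \<in> BB j" by blast
  have "comp i v = v" using comp_W[OF BB_W[OF assms(1) v(1)]] by simp
  moreover have "comp i v = 0" using comp_W[OF BB_W[OF assms(2) v(2)]] assms(3) by simp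
  ultimately show False using BB_nz[OF v(1)] by simp
qed

definition BU :: "'a set" where "BU = (\<Union>j\<in>{1..m}. BB j)"

lemma BU_fin: "finite BU" unfolding BU_def using BB_fin by blast

lemma BU_span: "span BU = UNIV"
proof -
  have "x \<in> span BU" for x
  proof -
    have "(\<Sum>j=1..m. comp j x) \<in> span BU"
    proof (rule span_sum)
      fix j assume j: "j \<in> {1..m}"
      have "comp j x \<in> V j" using comp_in[of j x] j by (simp add: W_def)
      then have "comp j x \<in> span (BB j)" using BB by blast
      moreover have "span (BB j) \<subseteq> span BU" using j unfolding BU_def by (intro span_mono) blast
      ultimately show "comp j x \<in> span BU" by blast
    qed
    then show ?thesis using comp_sum[of x] by simp
  qed
  then show ?thesis by blast
qed

lemma comp0: "comp j 0 = 0"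
  using comp_W[OF W0[of 1]] by simp

lemma BU_indep: "independent BU"
  unfolding independent_explicit
proof (intro conjI allI impI ballI)
  show "finite BU" by (rule BU_fin)
  fix c :: "'a \<Rightarrow> real" and v
  assume s: "(\<Sum>v\<in>BU. c v *\<^sub>R v) = 0" and v: "v \<in> BU"
  define w where "w j = (if j \<in> {1..m} then (\<Sum>v\<in>BB j. c v *\<^sub>R v) else 0)" for j
  have wW: "w j \<in> W j" for j
  proof (cases "j \<in> {1..m}")
    case True
    have "(\<Sum>v\<in>BB j. c v *\<^sub>R v) \<in> V j"
      using BB subV[OF True] by (intro subspace_sum[OF subV[OF True]] subspace_scale[OF subV[OF True]]) blast
    then show ?thesis using True by (simp add: w_def W_def)
  next
    case False
    show ?thesis unfolding w_def by (subst if_not_P[OF False]) (rule W0)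
  qed
  have "(\<Sum>v\<in>BU. c v *\<^sub>R v) = (\<Sum>j\<in>{1..m}. \<Sum>v\<in>BB j. c v *\<^sub>R v)"
    unfolding BU_def using BB_fin BB_disj by (intro sum.UNION_disjoint) auto
  also have "\<dots> = (\<Sum>j=1..m. w j)" by (simp add: w_def)
  finally have "0 = (\<Sum>j=1..m. w j)" using s by simp
  then have "comp j 0 = w j" for j using comp_uniq[of w 0 j] wW by blast
  then have wz: "w j = 0" for j using comp0 by simp
  from v obtain j where j: "j \<in> {1..m}" "v \<in> BB j" unfolding BU_def by blast
  have "(\<Sum>v\<in>BB j. c v *\<^sub>R v) = 0" using wz[of j] j by (simp add: w_def)
  then show "c v = 0" using BB[of j] j unfolding independent_explicit by blast
qed

lemma BU_card: "card BU = DIM('a)"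
  using basis_card_eq_dim[of BU UNIV] BU_span BU_indep by simp

definition jj :: "'a \<Rightarrow> nat" where "jj v = (THE j. j \<in> {1..m} \<and> v \<in> BB j)"

lemma jj: assumes "j \<in> {1..m}" "v \<in> BB j" shows "jj v = j"
  unfolding jj_def using assms BB_disj by (intro the_equality) auto

lemma sum_jj: "(\<Sum>v\<in>BU. jj v) = hom_dim m V"
proof -
  have "(\<Sum>v\<in>BU. jj v) = (\<Sum>j\<in>{1..m}. \<Sum>v\<in>BB j. jj v)"
    unfolding BU_def using BB_fin BB_disj by (intro sum.UNION_disjoint) auto
  also have "\<dots> = (\<Sum>j\<in>{1..m}. \<Sum>v\<in>BB j. j)"
    by (intro sum.cong refl) (simp add: jj)
  also have "\<dots> = (\<Sum>j\<in>{1..m}. j * dim (V j))"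
    using BB by (simp add: mult.commute)
  finally show ?thesis by (simp add: hom_dim_def)
qed

lemma strata_basis:
  obtains u :: "'a \<Rightarrow> 'a" where "bij_betw u Basis BU"
proof -
  have "card (Basis :: 'a set) = card BU" using BU_card by simp
  then obtain h where "bij_betw h (Basis :: 'a set) BU"
    using finite_same_card_bij[OF finite_Basis BU_fin] by blast
  then show ?thesis using that by blast
qed


lemma kap_dil:
  assumes s: "s > 0"
  shows "kap (D s) = ennreal (1 / s ^ hom_dim m V)"
proof -
  obtain u :: "'a \<Rightarrow> 'a" where u: "bij_betw u Basis BU" by (rule strata_basis)
  define J where "J b = jj (u b)" for b
  define A :: "'a \<Rightarrow> 'a" where "A x = (\<Sum>b\<in>Basis. (x \<bullet> b) *\<^sub>R u b)" for x
  define Dg :: "'a \<Rightarrow> 'a" where "Dg x = (\<Sum>b\<in>Basis. (s ^ J b * (x \<bullet> b)) *\<^sub>R b)" for x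
  define Dgi :: "'a \<Rightarrow> 'a" where "Dgi x = (\<Sum>b\<in>Basis. (inverse (s ^ J b) * (x \<bullet> b)) *\<^sub>R b)" for x
  have uB: "u b \<in> W (J b)" if "b \<in> Basis" for b
  proof -
    have "u b \<in> BU" using bij_betwE[OF u] that by blast
    then obtain j where j: "j \<in> {1..m}" "u b \<in> BB j" unfolding BU_def by blast
    then show ?thesis using BB_W jj unfolding J_def by simp
  qed
  have linA: "linear A"
    by (rule linearI) (simp_all add: A_def inner_add_left scaleR_add_left sum.distrib scaleR_sum_right)
  have linDg: "linear Dg"
    by (rule linearI) (simp_all add: Dg_def inner_add_left algebra_simps sum.distrib scaleR_sum_right)
  have surjA: "surj A"
  proof -
    have "y \<in> range A" for y
    proof -
      have "y \<in> span BU" using BU_span by simp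
      then obtain c where c: "y = (\<Sum>v\<in>BU. c v *\<^sub>R v)" using span_finite[OF BU_fin] by auto
      also have "\<dots> = (\<Sum>b\<in>Basis. c (u b) *\<^sub>R u b)"
        using sum.reindex_bij_betw[OF u, of "\<lambda>v. c v *\<^sub>R v"] by simp
      also have "\<dots> = A (\<Sum>b\<in>Basis. c (u b) *\<^sub>R b)"
        unfolding A_def by (intro sum.cong refl) simp
      finally show ?thesis by blast
    qed
    then show ?thesis by blast
  qed
  obtain A' where A': "linear A'" "\<And>x. A' (A x) = x" "\<And>x. A (A' x) = x"
    using linear_surjective_isomorphism[OF linA surjA] by auto
  have comm: "D s \<circ> A = A \<circ> Dg"
  proof
    fix x
    have "D s (A x) = (\<Sum>b\<in>Basis. (x \<bullet> b) *\<^sub>R D s (u b))"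
      unfolding A_def by (simp add: linear_sum[OF dil_linear] linear_scale[OF dil_linear])
    also have "\<dots> = (\<Sum>b\<in>Basis. (s ^ J b * (x \<bullet> b)) *\<^sub>R u b)"
      by (intro sum.cong refl) (simp add: dil_W[OF uB] mult.commute)
    also have "\<dots> = A (Dg x)"
      unfolding A_def Dg_def by simp
    finally show "(D s \<circ> A) x = (A \<circ> Dg) x" by simp
  qed
  have invD: "D s (D (1 / s) y) = y" for y using s by (simp add: dil_dil dil_1)
  have invDg: "Dg (Dgi y) = y" for y
  proof -
    have "Dg (Dgi y) = (\<Sum>b\<in>Basis. (y \<bullet> b) *\<^sub>R b)"
      unfolding Dg_def Dgi_def using s by (intro sum.cong refl) simp
    then show ?thesis by (simp add: euclidean_representation)
  qed
  have k1: "kap (D s \<circ> A) = kap A * kap (D s)"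
    by (rule kap_comp[OF dil_linear invD linA A'(3)])
  have k2: "kap (A \<circ> Dg) = kap Dg * kap A"
    by (rule kap_comp[OF linA A'(3) linDg invDg])
  have k3: "kap (A \<circ> A') = kap A' * kap A"
    by (rule kap_comp[OF linA A'(3) A'(1) A'(2)])
  have "A \<circ> A' = (\<lambda>x. x)" using A'(3) by (simp add: fun_eq_iff)
  then have k4: "kap A' * kap A = 1" using k3 kap_id by metis
  have "kap (D s) = (kap A' * kap A) * kap (D s)" using k4 by simp
  also have "\<dots> = kap A' * kap (D s \<circ> A)" using k1 by (simp add: ac_simps)
  also have "\<dots> = kap A' * kap (A \<circ> Dg)" using comm by simp
  also have "\<dots> = (kap A' * kap A) * kap Dg" using k2 by (simp add: ac_simps)
  also have "\<dots> = kap Dg" using k4 by simp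
  also have "\<dots> = ennreal (1 / (\<Prod>b\<in>Basis. \<bar>s ^ J b\<bar>))"
    unfolding Dg_def using s by (intro kap_diag) simp
  also have "(\<Prod>b\<in>Basis. \<bar>s ^ J b\<bar>) = s ^ (\<Sum>b\<in>Basis. J b)"
    using s by (simp add: power_sum)
  also have "(\<Sum>b\<in>Basis. J b) = hom_dim m V"
    unfolding J_def using sum.reindex_bij_betw[OF u, of jj] sum_jj by simp
  finally show ?thesis .
qed

lemma distr_dil:
  assumes s: "s > 0"
  shows "distr lborel borel (D s) = density lborel (\<lambda>_. ennreal (1 / s ^ hom_dim m V))"
proof (rule measure_eqI)
  show "sets (distr lborel borel (D s)) = sets (density lborel (\<lambda>_. ennreal (1 / s ^ hom_dim m V)))"
    by simp
  fix X assume "X \<in> sets (distr lborel borel (D s))"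
  then have X: "X \<in> sets borel" by simp
  have Dm: "D s \<in> borel_measurable borel" by (rule lin_meas[OF dil_linear])
  have invD: "D s (D (1 / s) y) = y" for y using s by (simp add: dil_dil dil_1)
  have "emeasure (distr lborel borel (D s)) X = emeasure lborel (D s -` X)"
    using Dm X by (simp add: emeasure_distr)
  also have "\<dots> = kap (D s) * emeasure lborel X"
    by (rule lin_scale[OF dil_linear invD X])
  also have "\<dots> = emeasure (density lborel (\<lambda>_. ennreal (1 / s ^ hom_dim m V))) X"
    using X by (simp add: kap_dil[OF s] emeasure_density nn_integral_cmult_indicator)
  finally show "emeasure (distr lborel borel (D s)) X = emeasure (density lborel (\<lambda>_. ennreal (1 / s ^ hom_dim m V))) X" .
qed

lemma int_dil:
  fixes F :: "'a \<Rightarrow> real"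
  assumes s: "s > 0"
  shows "(\<integral>x. F (D s x) \<partial>lborel) = (1 / s ^ hom_dim m V) * (\<integral>x. F x \<partial>lborel)"
proof (cases "F \<in> borel_measurable borel")
  case True
  have Dm: "D s \<in> borel_measurable borel" by (rule lin_meas[OF dil_linear])
  have "(\<integral>x. F (D s x) \<partial>lborel) = (\<integral>x. F x \<partial>(distr lborel borel (D s)))"
    using Dm True by (intro integral_distr[symmetric]) auto
  also have "\<dots> = (\<integral>x. F x \<partial>(density lborel (\<lambda>_. ennreal (1 / s ^ hom_dim m V))))"
    by (simp add: distr_dil[OF s])
  also have "\<dots> = (\<integral>x. (1 / s ^ hom_dim m V) *\<^sub>R F x \<partial>lborel)"
    using True s by (intro integral_density) auto
  also have "\<dots> = (1 / s ^ hom_dim m V) * (\<integral>x. F x \<partial>lborel)"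
    by simp
  finally show ?thesis .
next
  case False
  have Dm: "D (1 / s) \<in> borel_measurable borel" by (rule lin_meas[OF dil_linear])
  have "(\<lambda>x. F (D s x)) \<notin> borel_measurable borel"
  proof
    assume "(\<lambda>x. F (D s x)) \<in> borel_measurable borel"
    then have "(\<lambda>y. F (D s (D (1 / s) y))) \<in> borel_measurable borel"
      by (rule measurable_compose[OF Dm])
    then show False using False s by (simp add: dil_dil dil_1)
  qed
  then have "\<not> integrable lborel (\<lambda>x. F (D s x))" "\<not> integrable lborel F"
    using False borel_measurable_integrable by (auto simp del: measurable_lborel2)
  then show ?thesis by (simp add: not_integrable_integral_eq)
qed

end

lemma wedge_scale:
  "wedge_pair k (\<lambda>i X. r * \<alpha> i X) lam = r ^ k * wedge_pair k \<alpha> lam"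
proof -
  have h: "(\<lambda>(c, vs). c * (\<Sum>\<sigma> | \<sigma> permutes {..<k}. of_int (sign \<sigma>) * (\<Prod>i<k. r * \<alpha> i (vs ! \<sigma> i))))
     = (\<lambda>x. r ^ k * (\<lambda>(c, vs). c * (\<Sum>\<sigma> | \<sigma> permutes {..<k}. of_int (sign \<sigma>) * (\<Prod>i<k. \<alpha> i (vs ! \<sigma> i)))) x)"
    by (auto simp: fun_eq_iff prod.distrib sum_distrib_left algebra_simps)
  show ?thesis unfolding wedge_pair_def h sum_list_const_mult ..
qed

theorem lemma9p2:
  fixes br :: "'a::euclidean_space \<Rightarrow> 'a \<Rightarrow> 'a" and m k :: nat and V :: "nat \<Rightarrow> 'a set"
    and lam :: "(real \<times> 'a list) list" and r :: real
  assumes "carnot br m V" and "kvec k V lam" and "0 < r"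
  shows "\<forall>f g. test_fun br m V f \<longrightarrow> (\<forall>i<k. cc_loc_lipschitz br m V (g i)) \<longrightarrow>
           dil_push m V r (inv_precurrent br m V k lam) f g
             = r powr (real k - real (hom_dim m V)) * inv_precurrent br m V k lam f g"
proof (intro allI impI)
  fix f :: "'a \<Rightarrow> real" and g :: "nat \<Rightarrow> 'a \<Rightarrow> real"
  interpret C: carn br m V by unfold_locales (rule assms(1))
  define Fq where "Fq q = f q * wedge_pair k (\<lambda>i. pansu_diff br m V (g i) q) lam" for q
  have e: "(\<lambda>p. (f \<circ> dil m V r) p * wedge_pair k (\<lambda>i. pansu_diff br m V (g i \<circ> dil m V r) p) lam)
         = (\<lambda>p. r ^ k * Fq (dil m V r p))"
    by (simp add: C.pansu_dil[OF assms(3)] wedge_scale Fq_def fun_eq_iff algebra_simps)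
  have "dil_push m V r (inv_precurrent br m V k lam) f g
      = (\<integral>p. r ^ k * Fq (dil m V r p) \<partial>lborel)"
    unfolding dil_push_def inv_precurrent_def e[symmetric] by simp
  also have "\<dots> = r ^ k * (\<integral>p. Fq (dil m V r p) \<partial>lborel)"
    by simp
  also have "\<dots> = r ^ k * ((1 / r ^ hom_dim m V) * (\<integral>p. Fq p \<partial>lborel))"
    by (simp add: C.int_dil[OF assms(3)])
  also have "\<dots> = r powr (real k - real (hom_dim m V)) * inv_precurrent br m V k lam f g"
    unfolding inv_precurrent_def Fq_def[symmetric]
    using assms(3) by (simp add: powr_diff powr_realpow)
  finally show "dil_push m V r (inv_precurrent br m V k lam) f g
             = r powr (real k - real (hom_dim m V)) * inv_precurrent br m V k lam f g" .
qed

end
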